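(* Let $n\in\mathbb N$ be fixed, $\mathbb H=L^2(\mathbb R)$ with norm $\|\cdot\|$, $(\mathcal Af)(x)=f(x+1)$, $g_n=\sum_{k=0}^nk!\,\kappa_{n,k}\mathbb 1_{[-k,-k+1]}$, $\bar{\mathcal A}_n:=\mathcal A-\beta\langle g_n,\cdot\rangle\mathbb 1_{[0,1]}$, and let $\|\bar{\mathcal A}_n\|_{\mathcal L}$ denote its operator norm. Define, for $t\in[0,T]$ and $M\in\mathbb N$, $$\hat u_n(t)=\frac{\alpha a_2}{2a_1}\langle g_n,e^{(T-t)\bar{\mathcal A}_n}\mathbb 1_{[0,1]}\rangle,\qquad \hat u_{n,M}(t)=\frac{\alpha a_2}{2a_1}\Big\langle g_n,\sum_{k=0}^M\frac{(T-t)^k}{k!}\bar{\mathcal A}_n^k\mathbb 1_{[0,1]}\Big\rangle.$$ Then for every $t\in[0,T]$ with $M\ge(T-t)\|\bar{\mathcal A}_n\|_{\mathcal L}$, $$|\hat u_n(t)-\hat u_{n,M}(t)|\le\frac{\alpha a_2}{2a_1}\|g_n\|\,e^{(T-t)\|\bar{\mathcal A}_n\|_{\mathcal L}}\Big(1-e^{-\frac{(T-t)\|\bar{\mathcal A}_n\|_{\mathcal L}}{M+1}}\Big).$$ Moreover, for $M\ge T\|\bar{\mathcal A}_n\|_{\mathcal L}$, $$\sup_{t\in[0,T]}|\hat u_n(t)-\hat u_{n,M}(t)|\le\frac{\alpha a_2}{2a_1}\|g_n\|\,e^{T\|\bar{\mathcal A}_n\|_{\mathcal L}}\Big(1-e^{-\frac{T\|\bar{\mathcal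 A}_n\|_{\mathcal L}}{M+1}}\Big),$$ and the right-hand side tends to $0$ as $M\to\infty$.
   Context: $T>0$, $\alpha,\beta>0$, $a_1,a_2>0$ are constants. $\kappa_{n,k}$ are the coefficients of the Bernstein polynomial approximation $K_n(t)=\frac{1}{T^n}\sum_{k=0}^nK\big(\frac{Tk}{n}\big)\binom nk t^k(T-t)^{n-k}=\sum_{k=0}^n\kappa_{n,k}t^k$ of a continuous kernel $K$ on $[0,T]$, i.e. $\kappa_{n,k}=\frac{1}{T^k}\sum_{i=0}^k(-1)^{k-i}K\big(\frac{iT}{n}\big)\binom ni\binom{n-i}{k-i}$. *)

theory Defs
  imports "HOL-Analysis.Analysis"
begin

text \<open>Elements of H = L^2(R) are represented by (Borel measurable, square-integrable)
  real functions; norms and inner products are the usual L^2 ones (well defined up to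
  a.e. equality, which none of the quantities below depends on).\<close>

definition sqint :: "(real \<Rightarrow> real) \<Rightarrow> bool" where
  "sqint f \<longleftrightarrow> f \<in> borel_measurable lborel \<and> integrable lborel (\<lambda>x. (f x)\<^sup>2)"

definition L2norm :: "(real \<Rightarrow> real) \<Rightarrow> real" where
  "L2norm f = sqrt (LINT x|lborel. (f x)\<^sup>2)"

definition L2inner :: "(real \<Rightarrow> real) \<Rightarrow> (real \<Rightarrow> real) \<Rightarrow> real" where
  "L2inner f g = (LINT x|lborel. f x * g x)"

definition opnorm :: "((real \<Rightarrow> real) \<Rightarrow> (real \<Rightarrow> real)) \<Rightarrow> real" where
  "opnorm B = Sup {L2norm (B f) | f. sqint f \<and> L2norm f \<le> 1}"

definition shiftA :: "(real \<Rightarrow> real) \<Rightarrow> (real \<Rightarrow> real)" where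
  "shiftA f = (\<lambda>x. f (x + 1))"

definition kappa :: "(real \<Rightarrow> real) \<Rightarrow> real \<Rightarrow> nat \<Rightarrow> nat \<Rightarrow> real" where
  "kappa K T n k = (1 / T ^ k) *
     (\<Sum>i=0..k. (-1) ^ (k - i) * K (real i * T / real n) * real (n choose i) * real ((n - i) choose (k - i)))"

definition g_n :: "(real \<Rightarrow> real) \<Rightarrow> real \<Rightarrow> nat \<Rightarrow> real \<Rightarrow> real" where
  "g_n K T n = (\<lambda>x. \<Sum>k=0..n. fact k * kappa K T n k * indicator {- real k .. - real k + 1} x)"

definition Abar :: "(real \<Rightarrow> real) \<Rightarrow> real \<Rightarrow> real \<Rightarrow> nat \<Rightarrow> (real \<Rightarrow> real) \<Rightarrow> (real \<Rightarrow> real)" where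
  "Abar K T \<beta> n f = (\<lambda>x. shiftA f x - \<beta> * L2inner (g_n K T n) f * indicator {0..1} x)"

definition exp_partial :: "nat \<Rightarrow> real \<Rightarrow> ((real \<Rightarrow> real) \<Rightarrow> (real \<Rightarrow> real)) \<Rightarrow> (real \<Rightarrow> real) \<Rightarrow> real \<Rightarrow> real" where
  "exp_partial M s B f = (\<lambda>x. \<Sum>k\<le>M. s ^ k / fact k * (B ^^ k) f x)"

text \<open>h represents e^{sB} f: the exponential series converges to h in H.\<close>
definition is_opexp :: "real \<Rightarrow> ((real \<Rightarrow> real) \<Rightarrow> (real \<Rightarrow> real)) \<Rightarrow> (real \<Rightarrow> real) \<Rightarrow> (real \<Rightarrow> real) \<Rightarrow> bool" where
  "is_opexp s B f h \<longleftrightarrow> sqint h \<and> (\<lambda>M. L2norm (\<lambda>x. exp_partial M s B f x - h x)) \<longlonglongrightarrow> 0"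

definition u_hat :: "(real \<Rightarrow> real) \<Rightarrow> real \<Rightarrow> real \<Rightarrow> real \<Rightarrow> real \<Rightarrow> real \<Rightarrow> nat \<Rightarrow> real \<Rightarrow> real" where
  "u_hat K T \<alpha> \<beta> a1 a2 n t = \<alpha> * a2 / (2 * a1) *
     (THE v. \<exists>h. is_opexp (T - t) (Abar K T \<beta> n) (indicator {0..1}) h \<and> v = L2inner (g_n K T n) h)"

definition u_hat_M :: "(real \<Rightarrow> real) \<Rightarrow> real \<Rightarrow> real \<Rightarrow> real \<Rightarrow> real \<Rightarrow> real \<Rightarrow> nat \<Rightarrow> nat \<Rightarrow> real \<Rightarrow> real" where
  "u_hat_M K T \<alpha> \<beta> a1 a2 n M t = \<alpha> * a2 / (2 * a1) *
     L2inner (g_n K T n) (exp_partial M (T - t) (Abar K T \<beta> n) (indicator {0..1}))"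

end

theory Submission
  imports Defs "HOL-Analysis.Analysis"
begin

lemma sqint_meas: "sqint f \<Longrightarrow> f \<in> borel_measurable lborel" by (simp add: sqint_def)
lemma sqint_int: "sqint f \<Longrightarrow> integrable lborel (\<lambda>x. (f x)\<^sup>2)" by (simp add: sqint_def)

lemma sqint_add:
  assumes "sqint f" "sqint g" shows "sqint (\<lambda>x. f x + g x)"
proof -
  have m: "(\<lambda>x. f x + g x) \<in> borel_measurable lborel" using assms by (auto simp: sqint_def)
  have i: "integrable lborel (\<lambda>x. 2 * (f x)\<^sup>2 + 2 * (g x)\<^sup>2)" using assms by (auto simp: sqint_def)
  have "integrable lborel (\<lambda>x. (f x + g x)\<^sup>2)"
  proof (rule Bochner_Integration.integrable_bound[OF i])
    show "(\<lambda>x. (f x + g x)\<^sup>2) \<in> borel_measurable lborel" using m by measurable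
    show "AE x in lborel. norm ((f x + g x)\<^sup>2) \<le> norm (2 * (f x)\<^sup>2 + 2 * (g x)\<^sup>2)"
    proof (rule AE_I2)
      fix x
      have "0 \<le> (f x - g x)\<^sup>2" by simp
      then have h: "(f x + g x)\<^sup>2 \<le> 2 * (f x)\<^sup>2 + 2 * (g x)\<^sup>2"
        by (simp add: power2_eq_square algebra_simps)
      have "norm (2 * (f x)\<^sup>2 + 2 * (g x)\<^sup>2) = 2 * (f x)\<^sup>2 + 2 * (g x)\<^sup>2"
        unfolding real_norm_def by (intro abs_of_nonneg) simp
      then show "norm ((f x + g x)\<^sup>2) \<le> norm (2 * (f x)\<^sup>2 + 2 * (g x)\<^sup>2)"
        using h by simp
    qed
  qed
  with m show ?thesis by (simp add: sqint_def)
qed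

lemma sqint_scale:
  assumes "sqint f" shows "sqint (\<lambda>x. c * f x)"
proof -
  have "(\<lambda>x. (c * f x)\<^sup>2) = (\<lambda>x. c\<^sup>2 * (f x)\<^sup>2)" by (simp add: power_mult_distrib)
  then show ?thesis using assms by (auto simp: sqint_def)
qed

lemma sqint_diff:
  assumes "sqint f" "sqint g" shows "sqint (\<lambda>x. f x - g x)"
  using sqint_add[OF assms(1) sqint_scale[OF assms(2), of "-1"]] by simp

lemma sqint_zero: "sqint (\<lambda>x. 0)" by (simp add: sqint_def)

lemma sqint_indicator: "sqint (indicator {a..b} :: real \<Rightarrow> real)"
proof -
  have "(\<lambda>x. (indicator {a..b} x :: real)\<^sup>2) = indicator {a..b}"
    by (auto simp: indicator_def fun_eq_iff)
  then show ?thesis by (simp add: sqint_def integrable_real_indicator emeasure_lborel_Icc_eq)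
qed

lemma sqint_sum:
  assumes "finite A" "\<And>i. i \<in> A \<Longrightarrow> sqint (f i)"
  shows "sqint (\<lambda>x. \<Sum>i\<in>A. f i x)"
  using assms
proof (induction A rule: finite_induct)
  case empty then show ?case by (simp add: sqint_zero)
next
  case (insert a A)
  then show ?case by (simp add: sqint_add)
qed


lemma sqint_shift:
  assumes "sqint f" shows "sqint (shiftA f)"
proof -
  have m: "(\<lambda>x. f (x + 1)) \<in> borel_measurable lborel"
    using assms by (auto simp: sqint_def)
  have "integrable lborel (\<lambda>x. (f (1 + 1 * x))\<^sup>2)"
    using lborel_integrable_real_affine[of "\<lambda>x. (f x)\<^sup>2" 1 1] assms by (simp add: sqint_def)
  then show ?thesis using m by (simp add: sqint_def shiftA_def add.commute)
qed

lemma L2norm_shift: "L2norm (shiftA f) = L2norm f"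
proof -
  have "(LINT x|lborel. (f x)\<^sup>2) = (LINT x|lborel. (f (1 + 1 * x))\<^sup>2)"
    using lborel_integral_real_affine[of 1 "\<lambda>x. (f x)\<^sup>2" 1] by simp
  then show ?thesis by (simp add: L2norm_def shiftA_def add.commute)
qed

lemma sqint_prod:
  assumes "sqint f" "sqint g" shows "integrable lborel (\<lambda>x. f x * g x)"
proof -
  have i: "integrable lborel (\<lambda>x. (f x)\<^sup>2 + (g x)\<^sup>2)" using assms by (auto simp: sqint_def)
  show ?thesis
  proof (rule Bochner_Integration.integrable_bound[OF i])
    show "(\<lambda>x. f x * g x) \<in> borel_measurable lborel" using assms by (auto simp: sqint_def)
    show "AE x in lborel. norm (f x * g x) \<le> norm ((f x)\<^sup>2 + (g x)\<^sup>2)"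
    proof (rule AE_I2)
      fix x
      have "0 \<le> (\<bar>f x\<bar> - \<bar>g x\<bar>)\<^sup>2" by simp
      hence "2 * (\<bar>f x\<bar> * \<bar>g x\<bar>) \<le> (f x)\<^sup>2 + (g x)\<^sup>2"
        by (simp add: power2_eq_square algebra_simps)
      moreover have "0 \<le> \<bar>f x\<bar> * \<bar>g x\<bar>" by simp
      ultimately have "\<bar>f x\<bar> * \<bar>g x\<bar> \<le> (f x)\<^sup>2 + (g x)\<^sup>2" by linarith
      moreover have "norm ((f x)\<^sup>2 + (g x)\<^sup>2) = (f x)\<^sup>2 + (g x)\<^sup>2"
        unfolding real_norm_def by (intro abs_of_nonneg) simp
      ultimately show "norm (f x * g x) \<le> norm ((f x)\<^sup>2 + (g x)\<^sup>2)"
        by (simp add: abs_mult)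
    qed
  qed
qed

lemma L2norm_nonneg: "0 \<le> L2norm f"
  by (simp add: L2norm_def)

lemma Q_nonneg: "0 \<le> (LINT x|lborel. ((f::real\<Rightarrow>real) x)\<^sup>2)"
  by (rule Bochner_Integration.integral_nonneg_AE) simp

lemma L2norm_sq: "(L2norm f)\<^sup>2 = (LINT x|lborel. (f x)\<^sup>2)"
  by (simp add: L2norm_def Q_nonneg)

lemma L2norm_scale: "L2norm (\<lambda>x. c * f x) = \<bar>c\<bar> * L2norm f"
proof -
  have "(LINT x|lborel. (c * f x)\<^sup>2) = c\<^sup>2 * (LINT x|lborel. (f x)\<^sup>2)"
    by (simp add: power_mult_distrib)
  then show ?thesis by (simp add: L2norm_def real_sqrt_mult)
qed

lemma L2inner_scale: "L2inner g (\<lambda>x. c * f x) = c * L2inner g f"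
proof -
  have "(\<lambda>x. g x * (c * f x)) = (\<lambda>x. c * (g x * f x))" by (simp add: mult.left_commute)
  then show ?thesis by (simp add: L2inner_def)
qed

lemma L2inner_diff:
  assumes "sqint g" "sqint f" "sqint h"
  shows "L2inner g (\<lambda>x. f x - h x) = L2inner g f - L2inner g h"
proof -
  have "(\<lambda>x. g x * (f x - h x)) = (\<lambda>x. g x * f x - g x * h x)" by (simp add: algebra_simps)
  then show ?thesis using sqint_prod[OF assms(1,2)] sqint_prod[OF assms(1,3)]
    by (simp add: L2inner_def)
qed

lemma quad_lemma:
  fixes A B C :: real
  assumes "\<And>t. 0 \<le> A + 2 * t * B + t\<^sup>2 * C" "0 \<le> A" "0 \<le> C"
  shows "B\<^sup>2 \<le> A * C"
proof (cases "C = 0")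
  case True
  have "B = 0"
  proof (rule ccontr)
    assume B: "B \<noteq> 0"
    have "0 \<le> A + 2 * (- (A + 1) / (2 * B)) * B + (- (A + 1) / (2 * B))\<^sup>2 * C" by (rule assms(1))
    also have "\<dots> = -1" using B True by (simp add: field_simps)
    finally show False by simp
  qed
  then show ?thesis using assms True by simp
next
  case False
  hence Cp: "C > 0" using assms by simp
  have "0 \<le> A + 2 * (- B / C) * B + (- B / C)\<^sup>2 * C" by (rule assms(1))
  also have "\<dots> = A - B\<^sup>2 / C" using Cp by (simp add: field_simps power2_eq_square)
  finally show ?thesis using Cp by (simp add: field_simps)
qed

lemma expand_sq:
  assumes "sqint f" "sqint g"
  shows "(LINT x|lborel. (f x + t * g x)\<^sup>2) =
    (LINT x|lborel. (f x)\<^sup>2) + 2 * t * L2inner f g + t\<^sup>2 * (LINT x|lborel. (g x)\<^sup>2)"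
proof -
  have "(\<lambda>x. (f x + t * g x)\<^sup>2) = (\<lambda>x. (f x)\<^sup>2 + (2 * t) * (f x * g x) + t\<^sup>2 * (g x)\<^sup>2)"
    by (simp add: power2_eq_square algebra_simps)
  moreover have "integrable lborel (\<lambda>x. (f x)\<^sup>2)" "integrable lborel (\<lambda>x. (g x)\<^sup>2)"
    using assms by (auto simp: sqint_def)
  moreover have "integrable lborel (\<lambda>x. f x * g x)" using sqint_prod[OF assms] .
  ultimately show ?thesis by (simp add: L2inner_def)
qed

lemma cauchy_schwarz:
  assumes "sqint f" "sqint g"
  shows "\<bar>L2inner f g\<bar> \<le> L2norm f * L2norm g"
proof -
  let ?A = "LINT x|lborel. (f x)\<^sup>2" and ?C = "LINT x|lborel. (g x)\<^sup>2"
  have "(L2inner f g)\<^sup>2 \<le> ?A * ?C"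
  proof (rule quad_lemma)
    fix t show "0 \<le> ?A + 2 * t * L2inner f g + t\<^sup>2 * ?C"
      using expand_sq[OF assms, of t] Q_nonneg[of "\<lambda>x. f x + t * g x"] by simp
  qed (auto simp: Q_nonneg)
  hence "sqrt ((L2inner f g)\<^sup>2) \<le> sqrt (?A * ?C)" by (rule real_sqrt_le_mono)
  then show ?thesis by (simp add: L2norm_def real_sqrt_mult)
qed

lemma triangle:
  assumes "sqint f" "sqint g"
  shows "L2norm (\<lambda>x. f x + g x) \<le> L2norm f + L2norm g"
proof -
  have "(L2norm (\<lambda>x. f x + g x))\<^sup>2 = (L2norm f)\<^sup>2 + 2 * L2inner f g + (L2norm g)\<^sup>2"
    using expand_sq[OF assms, of 1] by (simp add: L2norm_sq)
  also have "\<dots> \<le> (L2norm f)\<^sup>2 + 2 * (L2norm f * L2norm g) + (L2norm g)\<^sup>2"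
    using cauchy_schwarz[OF assms] by simp
  also have "\<dots> = (L2norm f + L2norm g)\<^sup>2" by (simp add: power2_eq_square algebra_simps)
  finally show ?thesis
    using L2norm_nonneg[of f] L2norm_nonneg[of g] L2norm_nonneg[of "\<lambda>x. f x + g x"]
    by (meson power2_le_imp_le add_nonneg_nonneg)
qed

lemma L2norm_cong: "(\<And>x. f x = g x) \<Longrightarrow> L2norm f = L2norm g"
  by (metis ext)

lemma L2norm_minus_comm: "L2norm (\<lambda>x. f x - g x) = L2norm (\<lambda>x. g x - f x)"
  using L2norm_scale[of "-1" "\<lambda>x. f x - g x"] by simp

lemma triangle_diff:
  assumes "sqint f" "sqint g" "sqint h"
  shows "L2norm (\<lambda>x. f x - h x) \<le> L2norm (\<lambda>x. f x - g x) + L2norm (\<lambda>x. g x - h x)"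
proof -
  have "L2norm (\<lambda>x. f x - h x) = L2norm (\<lambda>x. (f x - g x) + (g x - h x))" by simp
  also have "\<dots> \<le> L2norm (\<lambda>x. f x - g x) + L2norm (\<lambda>x. g x - h x)"
    by (rule triangle) (use assms in \<open>auto intro: sqint_diff\<close>)
  finally show ?thesis .
qed

lemma triangle_sum:
  assumes "finite A" "\<And>i. i \<in> A \<Longrightarrow> sqint (f i)"
  shows "L2norm (\<lambda>x. \<Sum>i\<in>A. c i * f i x) \<le> (\<Sum>i\<in>A. \<bar>c i\<bar> * L2norm (f i))"
  using assms
proof (induction A rule: finite_induct)
  case empty then show ?case by (simp add: L2norm_def)
next
  case (insert a A)
  have s1: "sqint (\<lambda>x. c a * f a x)" using insert by (auto intro: sqint_scale)
  have s2: "sqint (\<lambda>x. \<Sum>i\<in>A. c i * f i x)" using insert by (auto intro!: sqint_sum sqint_scale)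
  have "L2norm (\<lambda>x. \<Sum>i\<in>insert a A. c i * f i x) = L2norm (\<lambda>x. c a * f a x + (\<Sum>i\<in>A. c i * f i x))"
    using insert by simp
  also have "\<dots> \<le> L2norm (\<lambda>x. c a * f a x) + L2norm (\<lambda>x. \<Sum>i\<in>A. c i * f i x)"
    by (rule triangle[OF s1 s2])
  also have "\<dots> \<le> \<bar>c a\<bar> * L2norm (f a) + (\<Sum>i\<in>A. \<bar>c i\<bar> * L2norm (f i))"
    using insert by (simp add: L2norm_scale)
  finally show ?case using insert by simp
qed

lemma L2norm_e0: "L2norm (indicator {0..1} :: real \<Rightarrow> real) = 1"
proof -
  have eq: "(\<lambda>x. (indicator {0..1} x :: real)\<^sup>2) = indicator {0..1}"
    by (auto simp: indicator_def fun_eq_iff)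
  show ?thesis unfolding L2norm_def eq by (simp add: emeasure_lborel_Icc_eq measure_lborel_Icc)
qed

definition Pm :: "nat \<Rightarrow> real \<Rightarrow> real" where
  "Pm M x = (\<Sum>k\<le>M. x ^ k / fact k)"

lemma Pm_Suc: "Pm (Suc M) x = Pm M x + x ^ Suc M / fact (Suc M)"
  by (simp add: Pm_def)

lemma Pm_0: "Pm M 0 = 1"
  by (induction M) (auto simp: Pm_def)

lemma Pm_deriv: "((\<lambda>x. Pm M x) has_real_derivative (Pm M x - x ^ M / fact M)) (at x)"
proof (induction M)
  case 0
  then show ?case by (simp add: Pm_def)
next
  case (Suc M)
  have d: "((\<lambda>x. x ^ Suc M / fact (Suc M)) has_real_derivative (real (Suc M) * x ^ M / fact (Suc M))) (at x)"
    using DERIV_cdivide[OF DERIV_pow[of "Suc M" x], of "fact (Suc M)"] by simp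
  have e: "real (Suc M) * x ^ M / fact (Suc M) = x ^ M / fact M"
    by (simp add: fact_Suc field_simps del: of_nat_Suc)
  have "((\<lambda>x. Pm (Suc M) x) has_real_derivative (Pm M x - x ^ M / fact M + x ^ M / fact M)) (at x)"
    unfolding Pm_Suc using DERIV_add[OF Suc d] e by simp
  then show ?case by (simp add: Pm_Suc)
qed

definition Gm :: "nat \<Rightarrow> real \<Rightarrow> real" where
  "Gm M x = exp (- x) * Pm M x"

lemma Gm_deriv: "((\<lambda>x. Gm M x) has_real_derivative (- exp (- x) * x ^ M / fact M)) (at x)"
proof -
  have "((\<lambda>x. exp (- x) * Pm M x) has_real_derivative
     (- exp (- x) * Pm M x + exp (- x) * (Pm M x - x ^ M / fact M))) (at x)"
    by (auto intro!: derivative_eq_intros Pm_deriv)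
  then show ?thesis unfolding Gm_def by (simp add: algebra_simps)
qed

lemma aux_ineq:
  fixes v :: real assumes "0 \<le> v"
  shows "(1 - v) * exp v \<le> (1 + v) * exp (- v)"
proof -
  let ?f = "\<lambda>v. (1 + v) * exp (- v) - (1 - v) * exp v"
  have "?f 0 \<le> ?f v"
  proof (rule DERIV_nonneg_imp_nondecreasing[OF assms])
    fix x :: real assume x: "0 \<le> x" "x \<le> v"
    show "\<exists>y. (?f has_real_derivative y) (at x) \<and> 0 \<le> y"
      apply (rule exI[of _ "x * (exp x - exp (- x))"])
      apply (rule conjI)
       apply (auto intro!: derivative_eq_intros simp: algebra_simps)[1]
      using x by (auto intro!: mult_nonneg_nonneg)
  qed
  then show ?thesis by simp
qed

lemma Pm_nonneg: "0 \<le> x \<Longrightarrow> 0 \<le> Pm M x"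
  unfolding Pm_def by (auto intro!: sum_nonneg)

lemma Gm_nonneg: "0 \<le> x \<Longrightarrow> 0 \<le> Gm M x"
  by (simp add: Gm_def Pm_nonneg)

lemma Gm_0: "Gm M 0 = 1" by (simp add: Gm_def Pm_0)

lemma pow_compare:
  fixes u m :: real and M :: nat
  assumes "0 \<le> u" "u \<le> m" "m = real M" "M \<ge> 1"
  shows "exp (- (m - u)) * (m - u) ^ M \<le> exp (- (m + u)) * (m + u) ^ M"
proof -
  define v where "v = u / m"
  have m0: "m > 0" using assms by simp
  have v0: "0 \<le> v" using assms m0 by (simp add: v_def)
  have a: "(1 - v) * exp v \<le> (1 + v) * exp (- v)" using aux_ineq[OF v0] .
  have "m * ((1 - v) * exp v) \<le> m * ((1 + v) * exp (- v))"
    using a m0 by (simp add: mult_left_mono)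
  moreover have "m * ((1 - v) * exp v) = (m - u) * exp v" using m0 by (simp add: v_def field_simps)
  moreover have "m * ((1 + v) * exp (- v)) = (m + u) * exp (- v)" using m0 by (simp add: v_def field_simps)
  ultimately have b: "(m - u) * exp v \<le> (m + u) * exp (- v)" by simp
  have c: "0 \<le> (m - u) * exp v" using assms by simp
  have "((m - u) * exp v) ^ M \<le> ((m + u) * exp (- v)) ^ M"
    using power_mono[OF b c] .
  moreover have "exp v ^ M = exp (real M * v)" by (simp add: exp_of_nat_mult)
  moreover have "exp (- v) ^ M = exp (- (real M * v))" using exp_of_nat_mult[of M "- v"] by simp
  ultimately have "(m - u) ^ M * exp (real M * v) \<le> (m + u) ^ M * exp (- (real M * v))"
    by (simp add: power_mult_distrib)
  moreover have "real M * v = u" using m0 assms by (simp add: v_def)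
  ultimately have d: "(m - u) ^ M * exp u \<le> (m + u) ^ M * exp (- u)" by simp
  have "exp (- m) * ((m - u) ^ M * exp u) \<le> exp (- m) * ((m + u) ^ M * exp (- u))"
    using d by (simp add: mult_left_mono)
  then show ?thesis by (simp add: exp_diff exp_add exp_minus field_simps)
qed

lemma Gm_half:
  assumes "M \<ge> 1"
  shows "Gm M (real M) \<ge> 1 / 2"
proof -
  define m where "m = real M"
  let ?H = "\<lambda>u. Gm M (m - u) + Gm M (m + u)"
  have "?H m \<le> ?H 0"
  proof (rule DERIV_nonpos_imp_nonincreasing[of 0 m ?H])
    show "0 \<le> m" by (simp add: m_def)
  next
    fix u assume u: "0 \<le> u" "u \<le> m"
    have "(?H has_real_derivative
       (- (- exp (- (m - u)) * (m - u) ^ M / fact M) + (- exp (- (m + u)) * (m + u) ^ M / fact M))) (at u)"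
      by (auto intro!: derivative_eq_intros DERIV_chain2[OF Gm_deriv])
    moreover have "exp (- (m - u)) * (m - u) ^ M / fact M \<le> exp (- (m + u)) * (m + u) ^ M / fact M"
      using pow_compare[OF u m_def assms] by (simp add: divide_right_mono)
    ultimately show "\<exists>y. (?H has_real_derivative y) (at u) \<and> y \<le> 0" by force
  qed
  hence "Gm M 0 + Gm M (m + m) \<le> 2 * Gm M m" by simp
  moreover have "0 \<le> Gm M (m + m)" by (rule Gm_nonneg) (simp add: m_def)
  ultimately show ?thesis by (simp add: Gm_0 m_def)
qed

lemma Gm_at_M:
  assumes "M \<ge> 1"
  shows "exp (- real M / (real M + 1)) \<le> Gm M (real M)"
proof -
  have e1: "exp (1::real) < 272 / 100" by (rule e_less_272)
  consider "M = 1" | "M = 2" | "M \<ge> 3" using assms by linarith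
  then show ?thesis
  proof cases
    case 1
    have "Gm M (real M) = 2 * exp (- 1)" using 1 by (simp add: Gm_def Pm_def)
    moreover have "exp (1/2::real) < 2"
    proof -
      have "exp (1/2::real) ^ 2 = exp 1" by (simp add: exp_of_nat_mult[symmetric])
      hence "exp (1/2::real) ^ 2 < 2 ^ 2" using e1 by simp
      thus ?thesis by (rule power_less_imp_less_base) simp
    qed
    moreover have "exp (- 1/2::real) = exp (1/2) * exp (- 1)" by (simp add: exp_add[symmetric])
    ultimately show ?thesis using 1 by simp
  next
    case 2
    have "Gm M (real M) = 5 * exp (- 2)" using 2 by (simp add: Gm_def Pm_def eval_nat_numeral fact_numeral)
    moreover have "exp (4/3::real) < 5"
    proof -
      have "exp (4/3::real) ^ 3 = exp 1 ^ 4" by (simp add: exp_of_nat_mult[symmetric])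
      also have "\<dots> < (272/100) ^ 4" using e1 by (intro power_strict_mono) auto
      also have "\<dots> < 5 ^ 3" by (simp add: eval_nat_numeral)
      finally show ?thesis by (rule power_less_imp_less_base) simp
    qed
    moreover have "exp (- 2/3::real) = exp (4/3) * exp (- 2)" by (simp add: exp_add[symmetric])
    ultimately show ?thesis using 2 by simp
  next
    case 3
    have "real M / (real M + 1) \<ge> 3/4" using 3 by (simp add: field_simps)
    hence "exp (- real M / (real M + 1)) \<le> exp (- (3/4))" by simp
    also have "\<dots> \<le> 1/2"
    proof -
      have "1 + 3/4 + (3/4)^2/2 \<le> exp (3/4::real)" by (rule exp_lower_Taylor_quadratic) simp
      hence "2 \<le> exp (3/4::real)" by (simp add: power2_eq_square)
      thus ?thesis by (simp add: exp_minus field_simps)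
    qed
    also have "\<dots> \<le> Gm M (real M)" using Gm_half[of M] 3 by simp
    finally show ?thesis .
  qed
qed

lemma q_mono:
  fixes a b k :: real and M :: nat
  assumes "0 \<le> a" "a \<le> b" "b \<le> k"
  shows "(a * exp (- a / k)) ^ M \<le> (b * exp (- b / k)) ^ M"
proof -
  have k0: "k > 0 \<or> a = b" using assms by auto
  have "a * exp (- a / k) \<le> b * exp (- b / k)"
  proof (cases "a = b")
    case True then show ?thesis by simp
  next
    case False
    hence kp: "k > 0" using assms by auto
    show ?thesis
    proof (rule DERIV_nonneg_imp_nondecreasing[of a b "\<lambda>x. x * exp (- x / k)"])
      show "a \<le> b" by fact
    next
      fix x assume x: "a \<le> x" "x \<le> b"
      have "((\<lambda>x. x * exp (- x / k)) has_real_derivative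
           (1 * exp (- x / k) + exp (- x / k) * (- 1 / k) * x)) (at x)"
      proof -
        have "((\<lambda>x. - x / k) has_real_derivative (- 1 / k)) (at x)"
          using kp by (auto intro!: derivative_eq_intros)
        from DERIV_chain2[OF DERIV_exp this]
        have "((\<lambda>x. exp (- x / k)) has_real_derivative (exp (- x / k) * (- 1 / k))) (at x)" .
        from DERIV_mult[OF DERIV_ident this] show ?thesis .
      qed
      moreover have "1 * exp (- x / k) + exp (- x / k) * (- 1 / k) * x = exp (- x / k) * (1 - x / k)"
        by (simp add: algebra_simps)
      moreover have "0 \<le> exp (- x / k) * (1 - x / k)"
        using x assms kp by (auto simp: field_simps)
      ultimately show "\<exists>y. ((\<lambda>x. x * exp (- x / k)) has_real_derivative y) (at x) \<and> 0 \<le> y"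
        by metis
    qed
  qed
  then show ?thesis by (rule power_mono) (use assms in simp)
qed

lemma Pm_lower:
  fixes x :: real and M :: nat
  assumes "0 \<le> x" "x \<le> real M"
  shows "exp (x * real M / (real M + 1)) \<le> Pm M x"
proof -
  define k where "k = real M + 1"
  have kp: "k > 0" by (simp add: k_def)
  define W where "W = (\<lambda>x. Gm M x - exp (- x / k))"
  define r where "r = (\<lambda>x::real. (x * exp (- x / k)) ^ M)"
  define C where "C = fact M / k"
  have dW: "(W has_real_derivative (exp (- y / k) / fact M * (C - r y))) (at y)" for y
  proof -
    have "(W has_real_derivative (- exp (- y) * y ^ M / fact M - exp (- y / k) * (- 1 / k))) (at y)"
      unfolding W_def using kp
      by (intro DERIV_diff Gm_deriv DERIV_chain2[OF DERIV_exp]) (auto intro!: derivative_eq_intros)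
    moreover have hE: "exp (- y) = exp (- y / k) * exp (- y / k) ^ M"
    proof -
      have "exp (- y / k) ^ M = exp (real M * (- y / k))" by (rule exp_of_nat_mult[symmetric])
      hence "exp (- y / k) * exp (- y / k) ^ M = exp (- y / k + real M * (- y / k))"
        by (subst exp_add) simp
      moreover have "- y / k + real M * (- y / k) = - y"
      proof -
        have hM: "real M = k - 1" by (simp add: k_def)
        show ?thesis unfolding hM using kp by (simp add: field_simps)
      qed
      ultimately show ?thesis by simp
    qed
    moreover have "- (exp (- y / k) * exp (- y / k) ^ M) * y ^ M / fact M - exp (- y / k) * (- 1 / k)
        = exp (- y / k) / fact M * (C - r y)"
      using kp by (simp add: C_def r_def field_simps power_mult_distrib)
    ultimately show ?thesis by simp
  qed
  have W0: "W 0 = 0" by (simp add: W_def Gm_0)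
  have "0 \<le> W x"
  proof (cases "M = 0")
    case True
    then have "x = 0" using assms by simp
    then show ?thesis using W0 by simp
  next
    case False
    show ?thesis
    proof (cases "r x \<le> C")
      case True
      have "W 0 \<le> W x"
      proof (rule DERIV_nonneg_imp_nondecreasing[of 0 x W, OF assms(1)])
        fix y assume y: "0 \<le> y" "y \<le> x"
        have "r y \<le> r x" unfolding r_def by (rule q_mono) (use y assms in \<open>auto simp: k_def\<close>)
        hence "0 \<le> exp (- y / k) / fact M * (C - r y)" using True by simp
        then show "\<exists>d. (W has_real_derivative d) (at y) \<and> 0 \<le> d" using dW by blast
      qed
      then show ?thesis using W0 by simp
    next
      case False2: False
      have "W (real M) \<le> W x"
      proof (rule DERIV_nonpos_imp_nonincreasing[of x "real M" W, OF assms(2)])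
        fix y assume y: "x \<le> y" "y \<le> real M"
        have "r x \<le> r y" unfolding r_def by (rule q_mono) (use y assms in \<open>auto simp: k_def\<close>)
        hence "exp (- y / k) / fact M * (C - r y) \<le> 0" using False2
          by (intro mult_nonneg_nonpos) auto
        then show "\<exists>d. (W has_real_derivative d) (at y) \<and> d \<le> 0" using dW by blast
      qed
      moreover have "0 \<le> W (real M)" using Gm_at_M[of M] False by (simp add: W_def k_def)
      ultimately show ?thesis by simp
    qed
  qed
  hence "exp (- x / k) \<le> exp (- x) * Pm M x" by (simp add: W_def Gm_def)
  hence "exp x * exp (- x / k) \<le> exp x * (exp (- x) * Pm M x)" by simp
  hence "exp (x - x / k) \<le> Pm M x" by (simp add: exp_add[symmetric] exp_diff exp_minus field_simps)
  moreover have "x - x / k = x * real M / (real M + 1)" using kp by (simp add: k_def field_simps)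
  ultimately show ?thesis by simp
qed

lemma tail_bound:
  fixes x :: real and M :: nat
  assumes "0 \<le> x" "x \<le> real M"
  shows "exp x - Pm M x \<le> exp x * (1 - exp (- x / (real M + 1)))"
proof -
  have "exp x * exp (- x / (real M + 1)) = exp (x * real M / (real M + 1))"
    by (simp add: exp_add[symmetric] field_simps)
  then show ?thesis using Pm_lower[OF assms] by (simp add: algebra_simps)
qed

lemma exp_sums: "(\<lambda>n. x^n / fact n) sums exp (x::real)"
  using exp_converges[of x] by (simp add: divide_inverse mult.commute)

lemma Pm_le_exp:
  assumes "0 \<le> x" shows "Pm L x \<le> exp x"
proof -
  have su: "summable (\<lambda>n. x^n / fact n)" by (rule sums_summable[OF exp_sums])
  have "(\<Sum>n\<le>L. x^n / fact n) \<le> (\<Sum>n. x^n / fact n)"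
    by (rule sum_le_suminf[OF su]) (use assms in auto)
  also have "\<dots> = exp x" by (rule sums_unique[OF exp_sums, symmetric])
  finally show ?thesis by (simp add: Pm_def)
qed

lemma Pm_tendsto: "(\<lambda>M. Pm M x) \<longlonglongrightarrow> exp x"
proof -
  have su: "summable (\<lambda>n. x^n / fact n)" by (rule sums_summable[OF exp_sums])
  have "(\<Sum>n. x^n / fact n) = exp x" by (rule sums_unique[OF exp_sums, symmetric])
  then show ?thesis using summable_LIMSEQ'[OF su] by (simp add: Pm_def)
qed

context
  fixes K :: "real \<Rightarrow> real" and T \<beta> :: real and n :: nat
  assumes beta_pos: "\<beta> > 0"
begin

abbreviation "BB \<equiv> Abar K T \<beta> n"
abbreviation "gg \<equiv> g_n K T n"
abbreviation "e0 \<equiv> (indicator {0..1} :: real \<Rightarrow> real)"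
abbreviation "NN \<equiv> opnorm BB"

lemma sqint_g: "sqint gg"
  unfolding g_n_def by (intro sqint_sum sqint_scale sqint_indicator) auto

lemma sqint_B: "sqint f \<Longrightarrow> sqint (BB f)"
  unfolding Abar_def by (intro sqint_diff sqint_shift sqint_scale sqint_indicator)

lemma B_scale: "BB (\<lambda>x. c * f x) = (\<lambda>x. c * BB f x)"
  by (simp add: Abar_def shiftA_def L2inner_scale algebra_simps fun_eq_iff)

lemma B_bound1:
  assumes "sqint f" "L2norm f \<le> 1"
  shows "L2norm (BB f) \<le> 1 + \<beta> * L2norm gg"
proof -
  have eq: "BB f = (\<lambda>x. shiftA f x + (- (\<beta> * L2inner gg f)) * e0 x)"
    by (simp add: Abar_def fun_eq_iff)
  have "L2norm (BB f) \<le> L2norm (shiftA f) + L2norm (\<lambda>x. (- (\<beta> * L2inner gg f)) * e0 x)"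
    unfolding eq by (intro triangle sqint_shift sqint_scale sqint_indicator assms)
  also have "\<dots> = L2norm f + \<beta> * \<bar>L2inner gg f\<bar>"
  proof -
    have "L2norm (\<lambda>x. (- (\<beta> * L2inner gg f)) * e0 x) = \<bar>- (\<beta> * L2inner gg f)\<bar> * L2norm e0"
      by (rule L2norm_scale)
    then show ?thesis using beta_pos by (simp add: L2norm_shift L2norm_e0 abs_mult)
  qed
  also have "\<dots> \<le> 1 + \<beta> * (L2norm gg * L2norm f)"
    using assms cauchy_schwarz[OF sqint_g assms(1)] beta_pos
    by (intro add_mono mult_left_mono) auto
  also have "\<dots> \<le> 1 + \<beta> * (L2norm gg * 1)"
    using assms beta_pos L2norm_nonneg[of gg]
    by (intro add_mono mult_left_mono) auto
  finally show ?thesis by simp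
qed

lemma bdd: "bdd_above {L2norm (BB f) | f. sqint f \<and> L2norm f \<le> 1}"
proof (rule bdd_aboveI[of _ "1 + \<beta> * L2norm gg"])
  fix y assume "y \<in> {L2norm (BB f) | f. sqint f \<and> L2norm f \<le> 1}"
  then obtain f where "y = L2norm (BB f)" "sqint f" "L2norm f \<le> 1" by blast
  then show "y \<le> 1 + \<beta> * L2norm gg" using B_bound1 by simp
qed

lemma N_upper: "sqint f \<Longrightarrow> L2norm f \<le> 1 \<Longrightarrow> L2norm (BB f) \<le> NN"
  unfolding opnorm_def by (rule cSup_upper[OF _ bdd]) auto

lemma N_nonneg: "0 \<le> NN"
proof -
  have "L2norm (\<lambda>x::real. 0::real) = 0" by (simp add: L2norm_def)
  hence "L2norm (BB (\<lambda>x. 0)) \<le> NN" using N_upper[OF sqint_zero] by simp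
  then show ?thesis using L2norm_nonneg[of "BB (\<lambda>x. 0)"] by linarith
qed

lemma op_bound:
  assumes "sqint v"
  shows "L2norm (BB v) \<le> NN * L2norm v"
proof (cases "L2norm v = 0")
  case False
  define r where "r = L2norm v"
  have rp: "r > 0" using False L2norm_nonneg[of v] by (simp add: r_def)
  have w1: "L2norm (\<lambda>x. (1 / r) * v x) \<le> 1"
    using L2norm_scale[of "1 / r" v] rp by (simp add: r_def)
  have "L2norm (BB (\<lambda>x. (1 / r) * v x)) \<le> NN"
    by (rule N_upper[OF sqint_scale[OF assms] w1])
  moreover have "BB (\<lambda>x. (1 / r) * v x) = (\<lambda>x. (1 / r) * BB v x)" by (rule B_scale)
  ultimately have "L2norm (\<lambda>x. (1 / r) * BB v x) \<le> NN" by simp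
  hence "\<bar>1 / r\<bar> * L2norm (BB v) \<le> NN" by (simp only: L2norm_scale)
  hence "(1 / r) * L2norm (BB v) \<le> NN" using rp by simp
  then show ?thesis using rp by (simp add: r_def field_simps)
next
  case True
  have "L2norm (BB v) = 0"
  proof (rule ccontr)
    assume ne: "L2norm (BB v) \<noteq> 0"
    hence p: "L2norm (BB v) > 0" using L2norm_nonneg[of "BB v"] by simp
    define c where "c = (NN + 1) / L2norm (BB v)"
    have cp: "c > 0" using p N_nonneg by (simp add: c_def)
    have "L2norm (BB (\<lambda>x. c * v x)) \<le> NN"
      using True by (intro N_upper sqint_scale assms) (simp add: L2norm_scale)
    moreover have "BB (\<lambda>x. c * v x) = (\<lambda>x. c * BB v x)" by (rule B_scale)
    ultimately have "L2norm (\<lambda>x. c * BB v x) \<le> NN" by simp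
    hence "\<bar>c\<bar> * L2norm (BB v) \<le> NN" by (simp only: L2norm_scale)
    hence "c * L2norm (BB v) \<le> NN" using cp by simp
    then show False using p by (simp add: c_def)
  qed
  then show ?thesis using True by simp
qed

definition "fk k = (BB ^^ k) e0"

lemma fk_Suc: "fk (Suc k) = BB (fk k)" by (simp add: fk_def)

lemma sqint_fk: "sqint (fk k)"
  by (induction k) (auto simp: fk_def sqint_indicator sqint_B)

lemma norm_fk: "L2norm (fk k) \<le> NN ^ k"
proof (induction k)
  case 0 then show ?case by (simp add: fk_def L2norm_e0)
next
  case (Suc k)
  have "L2norm (fk (Suc k)) \<le> NN * L2norm (fk k)" unfolding fk_Suc by (rule op_bound[OF sqint_fk])
  also have "\<dots> \<le> NN * NN ^ k" using Suc N_nonneg by (intro mult_left_mono) auto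
  finally show ?case by simp
qed

definition "DD = (1 + \<beta> * L2norm gg) * (1 + NN)"

lemma DD_ge: "NN \<le> DD" "0 \<le> DD"
proof -
  have a: "0 \<le> \<beta> * L2norm gg" using beta_pos L2norm_nonneg[of gg] by simp
  have "0 \<le> \<beta> * L2norm gg * (1 + NN)" using a N_nonneg by simp
  moreover have "(1 + \<beta> * L2norm gg) * (1 + NN) = (1 + NN) + \<beta> * L2norm gg * (1 + NN)"
    by (simp add: algebra_simps)
  ultimately have "1 + NN \<le> (1 + \<beta> * L2norm gg) * (1 + NN)" by linarith
  then show "NN \<le> DD" unfolding DD_def by linarith
  show "0 \<le> DD" using N_nonneg a unfolding DD_def by simp
qed

lemma fk_pt: "\<bar>fk k x\<bar> \<le> DD ^ k"
proof (induction k arbitrary: x)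
  case 0 then show ?case by (simp add: fk_def indicator_def)
next
  case (Suc k)
  let ?a = "\<beta> * L2norm gg"
  have a: "0 \<le> ?a" using beta_pos L2norm_nonneg[of gg] by simp
  have "fk (Suc k) x = fk k (x + 1) - \<beta> * L2inner gg (fk k) * e0 x"
    by (simp add: fk_Suc Abar_def shiftA_def)
  hence "\<bar>fk (Suc k) x\<bar> \<le> \<bar>fk k (x + 1)\<bar> + \<bar>\<beta> * L2inner gg (fk k) * e0 x\<bar>"
    using abs_triangle_ineq4 by simp
  also have "\<dots> \<le> DD ^ k + \<beta> * (L2norm gg * L2norm (fk k)) * 1"
  proof -
    have i1: "\<bar>fk k (x + 1)\<bar> \<le> DD ^ k" by (rule Suc.IH)
    have "\<bar>L2inner gg (fk k)\<bar> * \<bar>e0 x\<bar> \<le> \<bar>L2inner gg (fk k)\<bar>"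
      by (simp add: indicator_def)
    also have "\<dots> \<le> L2norm gg * L2norm (fk k)" by (rule cauchy_schwarz[OF sqint_g sqint_fk])
    finally have "\<beta> * (\<bar>L2inner gg (fk k)\<bar> * \<bar>e0 x\<bar>) \<le> \<beta> * (L2norm gg * L2norm (fk k))"
      using beta_pos by (intro mult_left_mono) auto
    moreover have "\<bar>\<beta> * L2inner gg (fk k) * e0 x\<bar> = \<bar>\<beta>\<bar> * (\<bar>L2inner gg (fk k)\<bar> * \<bar>e0 x\<bar>)"
      by (simp only: abs_mult mult.assoc)
    moreover have "\<bar>\<beta>\<bar> = \<beta>" using beta_pos by simp
    ultimately show ?thesis using i1 by linarith
  qed
  also have "\<dots> \<le> DD ^ k + ?a * DD ^ k"
  proof -
    have "L2norm (fk k) \<le> DD ^ k"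
      using norm_fk[of k] power_mono[OF DD_ge(1) N_nonneg, of k] by simp
    hence "L2norm gg * L2norm (fk k) \<le> L2norm gg * DD ^ k"
      using L2norm_nonneg[of gg] by (rule mult_left_mono)
    hence "\<beta> * (L2norm gg * L2norm (fk k)) \<le> \<beta> * (L2norm gg * DD ^ k)"
      by (rule mult_left_mono) (use beta_pos in simp)
    then show ?thesis by (simp add: mult.assoc)
  qed
  also have "\<dots> \<le> DD ^ Suc k"
  proof -
    have "0 \<le> (1 + ?a) * NN" using a N_nonneg by simp
    moreover have "DD = (1 + ?a) + (1 + ?a) * NN" by (simp add: DD_def algebra_simps)
    ultimately have "1 + ?a \<le> DD" by linarith
    hence "(1 + ?a) * DD ^ k \<le> DD * DD ^ k"
      by (rule mult_right_mono) (use DD_ge(2) in simp)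
    then show ?thesis by (simp add: algebra_simps)
  qed
  finally show ?case .
qed

abbreviation "SS M s \<equiv> exp_partial M s BB e0"

lemma SS_eq: "SS M s = (\<lambda>x. \<Sum>k\<le>M. s ^ k / fact k * fk k x)"
  by (simp add: exp_partial_def fk_def)

lemma sqint_SS: "sqint (SS M s)"
  unfolding SS_eq by (intro sqint_sum sqint_scale sqint_fk) auto

lemma SS_diff:
  assumes "M \<le> L" "0 \<le> s"
  shows "L2norm (\<lambda>x. SS L s x - SS M s x) \<le> exp (s * NN) - Pm M (s * NN)"
proof -
  have U: "{..L} = {..M} \<union> {M<..L}" using assms by auto
  have eq: "SS L s x - SS M s x = (\<Sum>k\<in>{M<..L}. s ^ k / fact k * fk k x)" for x
    unfolding SS_eq U by (subst sum.union_disjoint) auto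
  have "L2norm (\<lambda>x. SS L s x - SS M s x) = L2norm (\<lambda>x. \<Sum>k\<in>{M<..L}. s ^ k / fact k * fk k x)"
    by (simp add: eq)
  also have "\<dots> \<le> (\<Sum>k\<in>{M<..L}. \<bar>s ^ k / fact k\<bar> * L2norm (fk k))"
    by (rule triangle_sum) (auto intro: sqint_fk)
  also have "\<dots> \<le> (\<Sum>k\<in>{M<..L}. (s * NN) ^ k / fact k)"
  proof (rule sum_mono)
    fix k
    have "\<bar>s ^ k / fact k\<bar> = s ^ k / fact k" using assms by simp
    moreover have "s ^ k / fact k * L2norm (fk k) \<le> s ^ k / fact k * NN ^ k"
      by (rule mult_left_mono[OF norm_fk]) (use assms in simp)
    ultimately have "\<bar>s ^ k / fact k\<bar> * L2norm (fk k) \<le> s ^ k / fact k * NN ^ k" by simp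
    then show "\<bar>s ^ k / fact k\<bar> * L2norm (fk k) \<le> (s * NN) ^ k / fact k"
      by (simp add: power_mult_distrib)
  qed
  also have "\<dots> = Pm L (s * NN) - Pm M (s * NN)"
    unfolding Pm_def U by (subst sum.union_disjoint) auto
  also have "\<dots> \<le> exp (s * NN) - Pm M (s * NN)"
    using Pm_le_exp[of "s * NN" L] assms N_nonneg by simp
  finally show ?thesis .
qed

definition "hfun s x = (\<Sum>k. s ^ k / fact k * fk k x)"

lemma summ: "summable (\<lambda>k. s ^ k / fact k * fk k x)"
proof (rule summable_comparison_test)
  show "summable (\<lambda>k. (\<bar>s\<bar> * DD) ^ k / fact k)" using exp_sums sums_summable by blast
  show "\<exists>N. \<forall>k\<ge>N. norm (s ^ k / fact k * fk k x) \<le> (\<bar>s\<bar> * DD) ^ k / fact k"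
  proof (intro exI allI impI)
    fix k
    have "\<bar>s\<bar> ^ k * \<bar>fk k x\<bar> \<le> \<bar>s\<bar> ^ k * DD ^ k"
      by (rule mult_left_mono[OF fk_pt]) simp
    hence "\<bar>s\<bar> ^ k * \<bar>fk k x\<bar> / fact k \<le> \<bar>s\<bar> ^ k * DD ^ k / fact k"
      by (rule divide_right_mono) simp
    moreover have "norm (s ^ k / fact k * fk k x) = \<bar>s\<bar> ^ k * \<bar>fk k x\<bar> / fact k"
      by (simp add: abs_mult power_abs)
    moreover have "(\<bar>s\<bar> * DD) ^ k / fact k = \<bar>s\<bar> ^ k * DD ^ k / fact k"
      by (simp add: power_mult_distrib)
    ultimately show "norm (s ^ k / fact k * fk k x) \<le> (\<bar>s\<bar> * DD) ^ k / fact k" by simp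
  qed
qed

lemma SS_tendsto: "(\<lambda>L. SS L s x) \<longlonglongrightarrow> hfun s x"
  unfolding SS_eq hfun_def using summable_LIMSEQ'[OF summ] by simp

lemma meas_hfun: "hfun s \<in> borel_measurable lborel"
  by (rule borel_measurable_LIMSEQ_real[OF SS_tendsto]) (rule sqint_meas[OF sqint_SS])

lemma fatou_part:
  assumes "0 \<le> s"
  shows "integrable lborel (\<lambda>x. (SS M s x - hfun s x)\<^sup>2) \<and>
         L2norm (\<lambda>x. SS M s x - hfun s x) \<le> exp (s * NN) - Pm M (s * NN)"
proof -
  define tb where "tb = exp (s * NN) - Pm M (s * NN)"
  have tb0: "0 \<le> tb" using Pm_le_exp[of "s * NN" M] assms N_nonneg by (simp add: tb_def)
  have mS: "SS L s \<in> borel_measurable lborel" for L by (rule sqint_meas[OF sqint_SS])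
  note mh = meas_hfun
  define u where "u = (\<lambda>L x. ennreal ((SS M s x - SS L s x)\<^sup>2))"
  have mu: "u L \<in> borel_measurable lborel" for L unfolding u_def
    by (rule measurable_compose[OF borel_measurable_power[OF borel_measurable_diff[OF mS mS]] measurable_ennreal])
  have lim: "(\<lambda>L. u L x) \<longlonglongrightarrow> ennreal ((SS M s x - hfun s x)\<^sup>2)" for x
    unfolding u_def by (rule tendsto_ennrealI[OF tendsto_power[OF tendsto_diff[OF tendsto_const SS_tendsto]]])
  have A: "(\<integral>\<^sup>+x. liminf (\<lambda>L. u L x) \<partial>lborel) \<le> liminf (\<lambda>L. integral\<^sup>N lborel (u L))"
    by (rule nn_integral_liminf[OF mu])
  have B: "(\<lambda>x. liminf (\<lambda>L. u L x)) = (\<lambda>x. ennreal ((SS M s x - hfun s x)\<^sup>2))"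
    by (rule ext) (rule lim_imp_Liminf[OF trivial_limit_sequentially lim])
  have C: "liminf (\<lambda>L. integral\<^sup>N lborel (u L)) \<le> ennreal (tb\<^sup>2)"
  proof -
    have "\<forall>\<^sub>F L in sequentially. integral\<^sup>N lborel (u L) \<le> ennreal (tb\<^sup>2)"
    proof (rule eventually_sequentiallyI[of M])
      fix L assume L: "M \<le> L"
      have int: "integrable lborel (\<lambda>x. (SS M s x - SS L s x)\<^sup>2)"
        using sqint_diff[OF sqint_SS sqint_SS] by (simp add: sqint_def)
      have "integral\<^sup>N lborel (u L) = ennreal ((L2norm (\<lambda>x. SS M s x - SS L s x))\<^sup>2)"
        unfolding u_def L2norm_sq by (rule nn_integral_eq_integral[OF int]) simp
      moreover have "L2norm (\<lambda>x. SS M s x - SS L s x) \<le> tb"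
        using SS_diff[OF L assms] L2norm_minus_comm[of "SS M s" "SS L s"] by (simp add: tb_def)
      hence "(L2norm (\<lambda>x. SS M s x - SS L s x))\<^sup>2 \<le> tb\<^sup>2"
        using L2norm_nonneg by (intro power_mono) auto
      ultimately show "integral\<^sup>N lborel (u L) \<le> ennreal (tb\<^sup>2)"
        by (simp add: ennreal_leI)
    qed
    hence "limsup (\<lambda>L. integral\<^sup>N lborel (u L)) \<le> ennreal (tb\<^sup>2)" by (rule Limsup_bounded)
    then show ?thesis using order_trans[OF Liminf_le_Limsup[OF trivial_limit_sequentially]] by blast
  qed
  have nn: "(\<integral>\<^sup>+x. ennreal ((SS M s x - hfun s x)\<^sup>2) \<partial>lborel) \<le> ennreal (tb\<^sup>2)"
    using order_trans[OF A C] by (simp only: B)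
  have int: "integrable lborel (\<lambda>x. (SS M s x - hfun s x)\<^sup>2)"
  proof (rule integrableI_bounded)
    show "(\<lambda>x. (SS M s x - hfun s x)\<^sup>2) \<in> borel_measurable lborel"
      by (rule borel_measurable_power[OF borel_measurable_diff[OF mS mh]])
    have "(\<integral>\<^sup>+x. ennreal (norm ((SS M s x - hfun s x)\<^sup>2)) \<partial>lborel) \<le> ennreal (tb\<^sup>2)"
      using nn by simp
    hence "(\<integral>\<^sup>+x. ennreal (norm ((SS M s x - hfun s x)\<^sup>2)) \<partial>lborel) < top"
      using ennreal_less_top[of "tb\<^sup>2"] by (rule order.strict_trans1)
    then show "(\<integral>\<^sup>+x. ennreal (norm ((SS M s x - hfun s x)\<^sup>2)) \<partial>lborel) < \<infinity>"
      by simp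
  qed
  have "ennreal (LINT x|lborel. (SS M s x - hfun s x)\<^sup>2) \<le> ennreal (tb\<^sup>2)"
    using nn nn_integral_eq_integral[OF int] by simp
  hence "(LINT x|lborel. (SS M s x - hfun s x)\<^sup>2) \<le> tb\<^sup>2"
    by (simp add: ennreal_le_iff)
  hence "L2norm (\<lambda>x. SS M s x - hfun s x) \<le> sqrt (tb\<^sup>2)"
    unfolding L2norm_def by (rule real_sqrt_le_mono)
  then show ?thesis using int tb0 by (simp add: tb_def)
qed

lemma opexp_exists:
  assumes "0 \<le> s"
  shows "is_opexp s BB e0 (hfun s)"
proof -
  have sq0: "sqint (\<lambda>x. SS 0 s x - hfun s x)"
    using fatou_part[OF assms, of 0] meas_hfun sqint_meas[OF sqint_SS, of 0 s]
    by (simp add: sqint_def)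
  have "sqint (\<lambda>x. SS 0 s x - (SS 0 s x - hfun s x))"
    by (rule sqint_diff[OF sqint_SS sq0])
  hence sh: "sqint (hfun s)" by simp
  have "(\<lambda>M. L2norm (\<lambda>x. SS M s x - hfun s x)) \<longlonglongrightarrow> 0"
  proof (rule tendsto_sandwich[of "\<lambda>M. 0" _ _ "\<lambda>M. exp (s * NN) - Pm M (s * NN)"])
    show "\<forall>\<^sub>F M in sequentially. 0 \<le> L2norm (\<lambda>x. SS M s x - hfun s x)"
      by (simp add: L2norm_nonneg)
    show "\<forall>\<^sub>F M in sequentially. L2norm (\<lambda>x. SS M s x - hfun s x) \<le> exp (s * NN) - Pm M (s * NN)"
      using fatou_part[OF assms] by simp
    show "(\<lambda>M. 0::real) \<longlonglongrightarrow> 0" by simp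
    show "(\<lambda>M. exp (s * NN) - Pm M (s * NN)) \<longlonglongrightarrow> 0"
      using tendsto_diff[OF tendsto_const Pm_tendsto, of "exp (s * NN)" "s * NN"] by simp
  qed
  then show ?thesis using sh by (simp add: is_opexp_def)
qed

lemma opexp_unique:
  assumes "is_opexp s BB e0 h1" "is_opexp s BB e0 h2"
  shows "L2inner gg h1 = L2inner gg h2"
proof -
  have s1: "sqint h1" and s2: "sqint h2" using assms by (auto simp: is_opexp_def)
  have l1: "(\<lambda>M. L2norm (\<lambda>x. SS M s x - h1 x)) \<longlonglongrightarrow> 0"
   and l2: "(\<lambda>M. L2norm (\<lambda>x. SS M s x - h2 x)) \<longlonglongrightarrow> 0" using assms by (auto simp: is_opexp_def)
  have le: "L2norm (\<lambda>x. h1 x - h2 x) \<le> L2norm (\<lambda>x. SS M s x - h1 x) + L2norm (\<lambda>x. SS M s x - h2 x)" for M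
    using triangle_diff[OF s1 sqint_SS s2, of M s] L2norm_minus_comm[of h1 "SS M s"] by simp
  have "L2norm (\<lambda>x. h1 x - h2 x) \<le> 0"
    using tendsto_add[OF l1 l2] le
    by (intro tendsto_le[OF trivial_limit_sequentially, of "\<lambda>M. L2norm (\<lambda>x. SS M s x - h1 x) + L2norm (\<lambda>x. SS M s x - h2 x)" 0 "\<lambda>M. L2norm (\<lambda>x. h1 x - h2 x)"]) auto
  hence "\<bar>L2inner gg (\<lambda>x. h1 x - h2 x)\<bar> \<le> 0"
    using cauchy_schwarz[OF sqint_g sqint_diff[OF s1 s2]] L2norm_nonneg[of gg]
    by (meson mult_nonneg_nonpos order_trans)
  then show ?thesis using L2inner_diff[OF sqint_g s1 s2] by simp
qed

end

lemma phi_mono: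
  fixes x y :: real and M :: nat
  assumes "0 \<le> x" "x \<le> y"
  shows "exp x * (1 - exp (- x / (real M + 1))) \<le> exp y * (1 - exp (- y / (real M + 1)))"
proof (rule mult_mono)
  show "exp x \<le> exp y" using assms by simp
  have "- y / (real M + 1) \<le> - x / (real M + 1)" using assms by (simp add: divide_right_mono)
  then show "1 - exp (- x / (real M + 1)) \<le> 1 - exp (- y / (real M + 1))" by simp
  show "0 \<le> exp y" by simp
  have "- x / (real M + 1) \<le> 0" using assms by simp
  then show "0 \<le> 1 - exp (- x / (real M + 1))" by simp
qed

theorem theorem3p4:
  fixes K :: "real \<Rightarrow> real" and T \<alpha> \<beta> a1 a2 :: real and n :: nat
  assumes "T > 0" and "\<alpha> > 0" and "\<beta> > 0" and "a1 > 0" and "a2 > 0"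
    and "continuous_on {0..T} K"
  defines "N \<equiv> opnorm (Abar K T \<beta> n)"
    and "c \<equiv> \<alpha> * a2 / (2 * a1)"
  shows "(\<forall>t\<in>{0..T}. \<forall>M::nat. real M \<ge> (T - t) * N \<longrightarrow>
            \<bar>u_hat K T \<alpha> \<beta> a1 a2 n t - u_hat_M K T \<alpha> \<beta> a1 a2 n M t\<bar>
              \<le> c * L2norm (g_n K T n) * exp ((T - t) * N) * (1 - exp (- ((T - t) * N) / (real M + 1))))
       \<and> (\<forall>M::nat. real M \<ge> T * N \<longrightarrow>
            (SUP t\<in>{0..T}. \<bar>u_hat K T \<alpha> \<beta> a1 a2 n t - u_hat_M K T \<alpha> \<beta> a1 a2 n M t\<bar>)
              \<le> c * L2norm (g_n K T n) * exp (T * N) * (1 - exp (- (T * N) / (real M + 1))))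
       \<and> (\<lambda>M::nat. c * L2norm (g_n K T n) * exp (T * N) * (1 - exp (- (T * N) / (real M + 1))))
            \<longlonglongrightarrow> 0"
proof -
  have bp: "\<beta> > 0" by fact
  have Nn: "0 \<le> N" unfolding N_def by (rule N_nonneg[OF bp])
  have cp: "0 < c" unfolding c_def using assms by simp
  define G where "G = L2norm (g_n K T n)"
  have Gn: "0 \<le> G" by (simp add: G_def L2norm_nonneg)
  have key: "\<bar>u_hat K T \<alpha> \<beta> a1 a2 n t - u_hat_M K T \<alpha> \<beta> a1 a2 n M t\<bar>
              \<le> c * G * exp ((T - t) * N) * (1 - exp (- ((T - t) * N) / (real M + 1)))"
    if t: "t \<in> {0..T}" and M: "real M \<ge> (T - t) * N" for t M
  proof -
    define s where "s = T - t"
    have s0: "0 \<le> s" using t by (simp add: s_def)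
    define h where "h = hfun K T \<beta> n s"
    have ex: "is_opexp s (Abar K T \<beta> n) (indicator {0..1}) h"
      unfolding h_def by (rule opexp_exists[OF bp s0])
    have sh: "sqint h" using ex by (simp add: is_opexp_def)
    have the: "(THE v. \<exists>h. is_opexp (T - t) (Abar K T \<beta> n) (indicator {0..1}) h \<and> v = L2inner (g_n K T n) h)
        = L2inner (g_n K T n) h"
    proof (rule the_equality)
      show "\<exists>h'. is_opexp (T - t) (Abar K T \<beta> n) (indicator {0..1}) h' \<and> L2inner (g_n K T n) h = L2inner (g_n K T n) h'"
        using ex by (auto simp: s_def)
      fix v assume "\<exists>h'. is_opexp (T - t) (Abar K T \<beta> n) (indicator {0..1}) h' \<and> v = L2inner (g_n K T n) h'"
      then obtain h' where h': "is_opexp s (Abar K T \<beta> n) (indicator {0..1}) h'" "v = L2inner (g_n K T n) h'"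
        by (auto simp: s_def)
      show "v = L2inner (g_n K T n) h" using opexp_unique[OF bp h'(1) ex] h'(2) by simp
    qed
    let ?S = "exp_partial M s (Abar K T \<beta> n) (indicator {0..1})"
    have sS: "sqint ?S" by (rule sqint_SS[OF bp])
    have "u_hat K T \<alpha> \<beta> a1 a2 n t - u_hat_M K T \<alpha> \<beta> a1 a2 n M t
        = c * (L2inner (g_n K T n) h - L2inner (g_n K T n) ?S)"
      unfolding u_hat_def u_hat_M_def the c_def s_def by (simp add: algebra_simps)
    also have "\<dots> = c * L2inner (g_n K T n) (\<lambda>x. h x - ?S x)"
      using L2inner_diff[OF sqint_g[OF bp] sh sS] by simp
    finally have "\<bar>u_hat K T \<alpha> \<beta> a1 a2 n t - u_hat_M K T \<alpha> \<beta> a1 a2 n M t\<bar>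
        = c * \<bar>L2inner (g_n K T n) (\<lambda>x. h x - ?S x)\<bar>" using cp by (simp add: abs_mult)
    also have "\<dots> \<le> c * (G * L2norm (\<lambda>x. h x - ?S x))"
      using cauchy_schwarz[OF sqint_g[OF bp] sqint_diff[OF sh sS]] cp by (simp add: G_def)
    also have "\<dots> \<le> c * (G * (exp (s * N) - Pm M (s * N)))"
    proof -
      have "L2norm (\<lambda>x. h x - ?S x) = L2norm (\<lambda>x. ?S x - h x)" by (rule L2norm_minus_comm)
      also have "\<dots> \<le> exp (s * N) - Pm M (s * N)"
        using fatou_part[OF bp s0, of M] by (simp add: h_def N_def)
      finally show ?thesis using cp Gn by (simp add: mult_left_mono)
    qed
    also have "\<dots> \<le> c * (G * (exp (s * N) * (1 - exp (- (s * N) / (real M + 1)))))"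
    proof -
      have "exp (s * N) - Pm M (s * N) \<le> exp (s * N) * (1 - exp (- (s * N) / (real M + 1)))"
        by (rule tail_bound) (use s0 Nn M in \<open>auto simp: s_def\<close>)
      then show ?thesis using cp Gn by (simp add: mult_left_mono)
    qed
    finally show ?thesis by (simp add: s_def mult.assoc)
  qed
  have part1: "\<forall>t\<in>{0..T}. \<forall>M::nat. real M \<ge> (T - t) * N \<longrightarrow>
            \<bar>u_hat K T \<alpha> \<beta> a1 a2 n t - u_hat_M K T \<alpha> \<beta> a1 a2 n M t\<bar>
              \<le> c * L2norm (g_n K T n) * exp ((T - t) * N) * (1 - exp (- ((T - t) * N) / (real M + 1)))"
    using key by (simp add: G_def)
  have part2: "(SUP t\<in>{0..T}. \<bar>u_hat K T \<alpha> \<beta> a1 a2 n t - u_hat_M K T \<alpha> \<beta> a1 a2 n M t\<bar>)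
              \<le> c * L2norm (g_n K T n) * exp (T * N) * (1 - exp (- (T * N) / (real M + 1)))"
    if M: "real M \<ge> T * N" for M
  proof (rule cSUP_least)
    show "{0..T} \<noteq> {}" using assms by simp
    fix t assume t: "t \<in> {0..T}"
    have tn: "(T - t) * N \<le> T * N" using t Nn by (simp add: mult_right_mono)
    have "\<bar>u_hat K T \<alpha> \<beta> a1 a2 n t - u_hat_M K T \<alpha> \<beta> a1 a2 n M t\<bar>
        \<le> c * G * (exp ((T - t) * N) * (1 - exp (- ((T - t) * N) / (real M + 1))))"
      using key[OF t] tn M by (simp add: mult.assoc)
    also have "\<dots> \<le> c * G * (exp (T * N) * (1 - exp (- (T * N) / (real M + 1))))"
      by (rule mult_left_mono[OF phi_mono]) (use t Nn tn cp Gn in auto)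
    finally show "\<bar>u_hat K T \<alpha> \<beta> a1 a2 n t - u_hat_M K T \<alpha> \<beta> a1 a2 n M t\<bar>
        \<le> c * L2norm (g_n K T n) * exp (T * N) * (1 - exp (- (T * N) / (real M + 1)))"
      by (simp add: G_def mult.assoc)
  qed
  have part3: "(\<lambda>M::nat. c * L2norm (g_n K T n) * exp (T * N) * (1 - exp (- (T * N) / (real M + 1))))
            \<longlonglongrightarrow> 0"
  proof -
    have "filterlim (\<lambda>M::nat. 1 + real M) at_top sequentially"
      by (rule filterlim_tendsto_add_at_top[OF tendsto_const filterlim_real_sequentially])
    hence "filterlim (\<lambda>M::nat. real M + 1) at_top sequentially" by (simp add: add.commute)
    hence inf: "filterlim (\<lambda>M::nat. real M + 1) at_infinity sequentially"
      by (rule filterlim_at_top_imp_at_infinity)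
    have "(\<lambda>M::nat. - (T * N) / (real M + 1)) \<longlonglongrightarrow> 0"
      by (rule tendsto_divide_0[OF tendsto_const inf])
    hence "(\<lambda>M::nat. exp (- (T * N) / (real M + 1))) \<longlonglongrightarrow> exp 0"
      by (rule tendsto_exp)
    hence "(\<lambda>M::nat. 1 - exp (- (T * N) / (real M + 1))) \<longlonglongrightarrow> 1 - 1"
      by (intro tendsto_diff tendsto_const) simp
    hence "(\<lambda>M::nat. c * L2norm (g_n K T n) * exp (T * N) * (1 - exp (- (T * N) / (real M + 1))))
        \<longlonglongrightarrow> c * L2norm (g_n K T n) * exp (T * N) * (1 - 1)"
      by (rule tendsto_mult[OF tendsto_const])
    then show ?thesis by simp
  qed
  show ?thesis using part1 part2 part3 by blast
qed

end
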